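(* Let $\varphi$ be a morphism of class $P_{ret}$ defined on $\{0,1\}^*$. Then $\varphi$ is conjugate to a standard special $P$-morphism.
   Context: For a finite word $w$, $\overline w$ denotes its reversal; $w$ is a palindrome if $w=\overline w$. A morphism $\varphi:\mathcal B^*\to\mathcal A^*$ is of class $P_{ret}$ if there exists a palindrome $p\in\mathcal A^*$ such that: (a) $\varphi(b)p$ is a palindrome for every $b\in\mathcal B$; (b) for every $b\in\mathcal B$, $\varphi(b)p$ contains exactly two occurrences of $p$, one as a prefix and one as a suffix; (c) $\varphi(b)\ne\varphi(c)$ for distinct $b,c\in\mathcal B$. A morphism $\sigma$ is conjugate to $\varphi$ (same domain alphabet) if there is a word $w$ such that either for every letter $a$, $\varphi(a)$ has prefix $w$ and $\sigma(a)=w^{-1}\varphi(a)w$, or for every letter $a$, $\varphi(a)$ has suffix $w$ and $\sigma(a)=w\varphi(a)w^{-1}$. A morphism $\sigma$ is a standard $P$-morphism if there is a palindrome $r$ (possibly empty) such that for every letter $x$, $\sigma(x)=rq_x$ where each $q_x$ is a palindrome; if $r$ is non-empty, some $q_x$ may be empty or of the form $q_x=\pi_x^{-1}$ with $\pi_x$ a proper palindromic suffix of $r$ (meaning $\sigma(x)$ is $r$ with the suffix $\pi_x$ removed). It is special if (1) the words $\sigma(x)=rq_x$ end with pairwise different letters, and (2) whenever $\sigma(x)r=rq_xr$ (for a letter $x$) occurs in some $\sigma(y_1y_2\cdots y_n)r$, this occurrence is $\sigma(y_m)r$ for some $1\le m\le n$ (i.e., it starts at position $|\sigma(y_1\cdots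 y_{m-1})|$). *)

theory Defs
  imports "HOL-Library.Sublist"
begin

(* Words are lists; a morphism B^* -> A^* is given by its values on letters,
   phi :: 'b => 'a list, extended by morph_ext. *)

definition morph_ext :: "('b \<Rightarrow> 'a list) \<Rightarrow> 'b list \<Rightarrow> 'a list" where
  "morph_ext f ws = concat (map f ws)"

definition palindrome :: "'a list \<Rightarrow> bool" where
  "palindrome w \<longleftrightarrow> rev w = w"

definition occ :: "'a list \<Rightarrow> 'a list \<Rightarrow> nat set" where
  "occ p w = {i. i + length p \<le> length w \<and> take (length p) (drop i w) = p}"

definition class_Pret :: "('b \<Rightarrow> 'a list) \<Rightarrow> bool" where
  "class_Pret phi \<longleftrightarrow> (\<exists>p. palindrome p \<and>
     (\<forall>b. palindrome (phi b @ p)) \<and>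
     (\<forall>b. card (occ p (phi b @ p)) = 2 \<and> prefix p (phi b @ p) \<and> suffix p (phi b @ p)) \<and>
     (\<forall>b c. b \<noteq> c \<longrightarrow> phi b \<noteq> phi c))"

definition conjugate :: "('b \<Rightarrow> 'a list) \<Rightarrow> ('b \<Rightarrow> 'a list) \<Rightarrow> bool" where
  "conjugate sigma phi \<longleftrightarrow> (\<exists>w.
     (\<forall>a. prefix w (phi a) \<and> sigma a = drop (length w) (phi a) @ w) \<or>
     (\<forall>a. suffix w (phi a) \<and> sigma a = w @ take (length (phi a) - length w) (phi a)))"

definition standard_P_wrt :: "'a list \<Rightarrow> ('b \<Rightarrow> 'a list) \<Rightarrow> bool" where
  "standard_P_wrt r sigma \<longleftrightarrow> palindrome r \<and>
     (\<forall>x. (\<exists>q. palindrome q \<and> sigma x = r @ q) \<or>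
          (r \<noteq> [] \<and> (\<exists>\<pi>. palindrome \<pi> \<and> suffix \<pi> r \<and> \<pi> \<noteq> r \<and>
                          sigma x = take (length r - length \<pi>) r)))"

definition special_wrt :: "'a list \<Rightarrow> ('b \<Rightarrow> 'a list) \<Rightarrow> bool" where
  "special_wrt r sigma \<longleftrightarrow>
     (\<forall>x. sigma x \<noteq> []) \<and>
     (\<forall>x y. x \<noteq> y \<longrightarrow> last (sigma x) \<noteq> last (sigma y)) \<and>
     (\<forall>x ys i. i \<in> occ (sigma x @ r) (morph_ext sigma ys @ r) \<longrightarrow>
        (\<exists>m < length ys. i = length (morph_ext sigma (take m ys))))"

definition standard_special_P :: "('b \<Rightarrow> 'a list) \<Rightarrow> bool" where
  "standard_special_P sigma \<longleftrightarrow> (\<exists>r. standard_P_wrt r sigma \<and> special_wrt r sigma)"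

end

theory Submission imports Defs begin

lemma occ_iff: "i \<in> occ p w \<longleftrightarrow> (\<exists>u v. w = u @ p @ v \<and> length u = i)"
proof
  assume "i \<in> occ p w"
  hence h: "i + length p \<le> length w" "take (length p) (drop i w) = p" by (auto simp: occ_def)
  have "w = take i w @ take (length p) (drop i w) @ drop (length p) (drop i w)"
    by (metis append_take_drop_id)
  with h show "\<exists>u v. w = u @ p @ v \<and> length u = i"
    by (metis length_take min.absorb2 le_add1 order.trans)
next
  assume "\<exists>u v. w = u @ p @ v \<and> length u = i"
  then show "i \<in> occ p w" by (auto simp: occ_def)
qed

lemma occ_finite: "finite (occ p w)"
  by (rule finite_subset[of _ "{..length w}"]) (auto simp: occ_def)

lemma occ_prefix_pat: "i \<in> occ q w \<Longrightarrow> prefix p q \<Longrightarrow> i \<in> occ p w"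
  unfolding occ_iff prefix_def by (metis append.assoc)

lemma occ_shift: "i \<in> occ (a@b) w \<Longrightarrow> i + length a \<in> occ b w"
  unfolding occ_iff by (metis append.assoc length_append)

lemma occ_drop_front: "i \<in> occ p (d @ w) \<Longrightarrow> length d \<le> i \<Longrightarrow> i - length d \<in> occ p w"
  unfolding occ_def by (auto simp: add.commute)

lemma occ_add_front: "i \<in> occ p w \<Longrightarrow> length d + i \<in> occ p (d @ w)"
  unfolding occ_def by auto

lemma occ_append_right: "i \<in> occ p w \<Longrightarrow> i \<in> occ p (w @ z)"
  unfolding occ_def by auto

lemma occ_cut_right: "i \<in> occ p (w @ z) \<Longrightarrow> i + length p \<le> length w \<Longrightarrow> i \<in> occ p w"
  unfolding occ_def by auto

lemma occ_self: "0 \<in> occ p (p @ z)" unfolding occ_def by auto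

lemma pal_split:
  assumes r: "palindrome r" and sr: "palindrome (s @ r)" and pre: "prefix r (s @ r)" and ne: "s \<noteq> []"
  shows "(\<exists>q. palindrome q \<and> s = r @ q) \<or>
          (r \<noteq> [] \<and> (\<exists>\<pi>. palindrome \<pi> \<and> suffix \<pi> r \<and> \<pi> \<noteq> r \<and>
                          s = take (length r - length \<pi>) r))"
proof (cases "length r \<le> length s")
  case True
  from pre obtain z where z: "s @ r = r @ z" by (auto simp: prefix_def)
  then obtain q where q: "s = r @ q" using True
    by (metis append_eq_append_conv_if append_eq_conv_conj)
  have "rev (s @ r) = s @ r" using sr by (simp add: palindrome_def)
  hence "r @ rev q @ r = r @ q @ r" using q r by (simp add: palindrome_def)
  hence "palindrome q" by (simp add: palindrome_def)
  thus ?thesis using q by blast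
next
  case False
  from pre obtain z where z: "s @ r = r @ z" by (auto simp: prefix_def)
  define \<pi> where "\<pi> = drop (length s) r"
  have rs: "r = s @ \<pi>" using z False unfolding \<pi>_def
    by (metis append_eq_append_conv_if append_take_drop_id nat_le_linear)
  have r': "rev \<pi> @ rev s = s @ \<pi>" using r rs by (simp add: palindrome_def)
  have rr: "rev r = r" using r by (simp add: palindrome_def)
  have "rev (s @ r) = s @ r" using sr by (simp add: palindrome_def)
  hence "r @ rev s = s @ r" using rr by simp
  hence "s @ \<pi> @ rev s = s @ s @ \<pi>" using rs by (metis append.assoc)
  hence "\<pi> @ rev s = s @ \<pi>" by simp
  with r' have "\<pi> = rev \<pi>" by (metis append_same_eq)
  hence "palindrome \<pi>" by (simp add: palindrome_def)
  moreover have "suffix \<pi> r" using rs by (simp add: suffix_def)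
  moreover have "\<pi> \<noteq> r" using rs ne by auto
  moreover have "s = take (length r - length \<pi>) r" using rs by simp
  moreover have "r \<noteq> []" using rs ne by simp
  ultimately show ?thesis by blast
qed

lemma me_Nil[simp]: "morph_ext f [] = []" by (simp add: morph_ext_def)
lemma me_Cons[simp]: "morph_ext f (y#ys) = f y @ morph_ext f ys" by (simp add: morph_ext_def)

lemma me_prefix: "(\<And>y. prefix p (f y @ p)) \<Longrightarrow> prefix p (morph_ext f ys @ p)"
proof (induction ys)
  case Nil then show ?case by simp
next
  case (Cons y ys)
  then obtain z where "morph_ext f ys @ p = p @ z" by (auto simp: prefix_def)
  moreover obtain z' where "f y @ p = p @ z'" using Cons.prems by (auto simp: prefix_def)
  ultimately show ?case by (simp add: prefix_def) (metis append.assoc)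
qed

lemma me_conj: assumes "\<And>y. sig y @ d = d @ f y" shows "morph_ext sig ys @ d = d @ morph_ext f ys"
  by (induction ys) (simp_all, metis append.assoc assms)

lemma me_len: "(\<And>y. length (sig y) = length (f y)) \<Longrightarrow> length (morph_ext sig ys) = length (morph_ext f ys)"
  by (induction ys) simp_all

lemma me_occ:
  assumes o: "\<And>y. occ p (f y @ p) = {0, length (f y)}" and pr: "\<And>y. prefix p (f y @ p)"
  shows "i \<in> occ p (morph_ext f ys @ p) \<Longrightarrow> i < length (morph_ext f ys) \<Longrightarrow>
         \<exists>m<length ys. i = length (morph_ext f (take m ys))"
proof (induction ys arbitrary: i)
  case Nil then show ?case by simp
next
  case (Cons y ys)
  show ?case
  proof (cases "i < length (f y)")
    case True
    obtain z where z: "morph_ext f ys @ p = p @ z" using me_prefix[of p f ys, OF pr] by (auto simp: prefix_def)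
    have "i \<in> occ p ((f y @ p) @ z)" using Cons.prems(1) z by simp
    hence "i \<in> occ p (f y @ p)" by (rule occ_cut_right) (use True in simp)
    hence "i = 0" using o True by auto
    thus ?thesis by (intro exI[of _ 0]) simp
  next
    case False
    have "i - length (f y) \<in> occ p (morph_ext f ys @ p)"
      using occ_drop_front[of i p "f y" "morph_ext f ys @ p"] Cons.prems(1) False by simp
    moreover have "i - length (f y) < length (morph_ext f ys)" using Cons.prems(2) False by simp
    ultimately obtain m where "m < length ys" "i - length (f y) = length (morph_ext f (take m ys))"
      using Cons.IH by blast
    thus ?thesis using False by (intro exI[of _ "Suc m"]) simp
  qed
qed

theorem lemma6p4:
  fixes phi :: "bool \<Rightarrow> 'a list"
  assumes "class_Pret phi"
  shows "\<exists>sigma. conjugate sigma phi \<and> standard_special_P sigma"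
proof -
  obtain p where pp: "palindrome p" and palW: "\<And>b. palindrome (phi b @ p)"
    and cardo: "\<And>b. card (occ p (phi b @ p)) = 2" and preW: "\<And>b. prefix p (phi b @ p)"
    and inj: "\<And>b c. b \<noteq> c \<Longrightarrow> phi b \<noteq> phi c"
    using assms unfolding class_Pret_def by blast
  have ne: "phi b \<noteq> []" for b
  proof
    assume "phi b = []"
    hence "occ p (phi b @ p) = {0}" by (auto simp: occ_def)
    with cardo[of b] show False by simp
  qed
  have occ2: "occ p (phi b @ p) = {0, length (phi b)}" for b
  proof -
    have "0 \<in> occ p (phi b @ p)" using preW[of b] unfolding occ_iff prefix_def by force
    moreover have "length (phi b) \<in> occ p (phi b @ p)" unfolding occ_iff
    by (intro exI[of _ "phi b"] exI[of _ "[]"]) simp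
    ultimately have sub: "{0, length (phi b)} \<subseteq> occ p (phi b @ p)" by auto
    have "card {0, length (phi b)} = 2" using ne[of b] by simp
    thus ?thesis using card_subset_eq[OF occ_finite sub] cardo[of b] by simp
  qed
  have npre: "\<not> prefix (phi a @ p) (phi b @ p)" if "a \<noteq> b" for a b
  proof
    assume "prefix (phi a @ p) (phi b @ p)"
    then obtain z where z: "phi b @ p = phi a @ p @ z" by (auto simp: prefix_def)
    show False
    proof (cases "z = []")
      case True then show False using z inj[OF that] by simp
    next
      case False
      have lt: "length (phi a) < length (phi b)"
        using z False by (metis add_less_cancel_right append_assoc length_append length_greater_0_conv
          less_add_same_cancel1)
      have "length (phi a) \<in> occ p (phi b @ p)" unfolding occ_iff using z by auto
      with occ2[of b] lt ne[of a] show False by auto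
    qed
  qed
  have "(phi True @ p) \<parallel> (phi False @ p)" using npre by blast
  then obtain c x u0 y u1 where xy: "x \<noteq> y" and WT: "phi True @ p = c @ x # u0"
    and WF: "phi False @ p = c @ y # u1"
    using parallel_decomp by blast
  have lenc: "length p \<le> length c"
  proof (rule ccontr)
    assume "\<not> ?thesis"
    hence lt: "length c < length p" by simp
    obtain z0 where z0: "phi True @ p = p @ z0" using preW[of True] by (auto simp: prefix_def)
    obtain z1 where z1: "phi False @ p = p @ z1" using preW[of False] by (auto simp: prefix_def)
    have "(phi True @ p) ! length c = x" using WT by simp
    moreover have "(phi False @ p) ! length c = y" using WF by simp
    moreover have "(phi True @ p) ! length c = p ! length c" using z0 lt by (simp add: nth_append)
    moreover have "(phi False @ p) ! length c = p ! length c" using z1 lt by (simp add: nth_append)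
    ultimately show False using xy by simp
  qed
  define e where "e = drop (length p) c"
  have ce: "c = p @ e"
  proof -
    obtain z0 where z0: "phi True @ p = p @ z0" using preW[of True] by (auto simp: prefix_def)
    have "take (length p) c = take (length p) (phi True @ p)" using WT lenc by simp
    also have "\<dots> = p" using z0 by simp
    finally show ?thesis unfolding e_def by (metis append_take_drop_id)
  qed
  define d where "d = rev e"
  have rc: "rev c = d @ p" using ce pp by (simp add: d_def palindrome_def)
  have phiT: "phi True = rev u0 @ x # d"
  proof -
    have "phi True @ p = rev (phi True @ p)" using palW[of True] by (simp add: palindrome_def)
    also have "\<dots> = rev u0 @ x # d @ p" using WT rc by simp
    finally show ?thesis by simp
  qed
  have phiF: "phi False = rev u1 @ y # d"
  proof -
    have "phi False @ p = rev (phi False @ p)" using palW[of False] by (simp add: palindrome_def)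
    also have "\<dots> = rev u1 @ y # d @ p" using WF rc by simp
    finally show ?thesis by simp
  qed
  define sig where "sig = (\<lambda>b::bool. if b then d @ rev u0 @ [x] else d @ rev u1 @ [y])"
  have sigd: "sig b @ d = d @ phi b" for b
    using phiT phiF by (cases b) (simp_all add: sig_def)
  have sigT: "sig True = d @ rev u0 @ [x]" and sigF: "sig False = d @ rev u1 @ [y]"
    by (simp_all add: sig_def)
  have conj: "conjugate sig phi"
    unfolding conjugate_def
  proof (intro exI[of _ d] disjI2 allI conjI)
    fix a
    show "suffix d (phi a)" using phiT phiF by (cases a) (simp_all add: suffix_def)
    show "sig a = d @ take (length (phi a) - length d) (phi a)"
      using phiT phiF by (cases a) (simp_all add: sig_def)
  qed
  define r where "r = d @ p @ rev d"
  have palr: "palindrome r" using pp by (simp add: r_def palindrome_def)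
  have sigr: "sig b @ r = d @ (phi b @ p) @ rev d" for b
    using sigd[of b] unfolding r_def by (metis append.assoc)
  have palsr: "palindrome (sig b @ r)" for b
    using palW[of b] unfolding sigr palindrome_def by simp
  have cpre: "prefix c (phi b @ p)" for b using WT WF by (cases b) (auto simp: prefix_def)
  have prer: "prefix r (sig b @ r)" for b
  proof -
    obtain z where z: "phi b @ p = c @ z" using cpre[of b] by (auto simp: prefix_def)
    have "sig b @ r = d @ (phi b @ p) @ rev d" by (rule sigr)
    also have "\<dots> = r @ z @ rev d" unfolding z r_def ce d_def by simp
    finally have "sig b @ r = r @ z @ rev d" .
    thus ?thesis by (simp add: prefix_def)
  qed
  have sne: "sig b \<noteq> []" for b by (simp add: sig_def)
  have std: "standard_P_wrt r sig"
    unfolding standard_P_wrt_def using palr pal_split[OF palr palsr prer sne] by blast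
  have lensig: "length (sig b) = length (phi b)" for b
    using arg_cong[OF sigd[of b], of length] by simp
  have spec: "special_wrt r sig"
    unfolding special_wrt_def
  proof (intro conjI allI impI)
    fix b show "sig b \<noteq> []" by (rule sne)
  next
    fix a b :: bool assume "a \<noteq> b"
    thus "last (sig a) \<noteq> last (sig b)" using xy by (cases a; cases b) (simp_all add: sig_def)
  next
    fix z ys i
    assume io: "i \<in> occ (sig z @ r) (morph_ext sig ys @ r)"
    have big: "morph_ext sig ys @ r = d @ (morph_ext phi ys @ p @ rev d)"
      using me_conj[of sig d phi ys, OF sigd] unfolding r_def by (metis append.assoc)
    have bnd: "i + length (sig z @ r) \<le> length (morph_ext sig ys @ r)" using io by (simp add: occ_def)
    have ilt: "i + length (phi z) \<le> length (morph_ext phi ys)"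
      using bnd me_len[of sig phi ys, OF lensig] lensig[of z] by simp
    have "prefix (d @ p) (sig z @ r)"
      using preW[of z] unfolding sigr prefix_def by (metis append.assoc)
    from occ_prefix_pat[OF io this]
    have "i + length d \<in> occ p (morph_ext sig ys @ r)" using occ_shift by blast
    hence "i \<in> occ p (morph_ext phi ys @ p @ rev d)"
      using occ_drop_front[of "i + length d" p d] big by simp
    hence "i \<in> occ p ((morph_ext phi ys @ p) @ rev d)" by simp
    hence "i \<in> occ p (morph_ext phi ys @ p)" by (rule occ_cut_right) (use ilt in simp)
    moreover have "i < length (morph_ext phi ys)" proof -
      have "0 < length (phi z)" using ne[of z] by simp
      thus ?thesis using ilt by linarith
    qed
    ultimately obtain m where "m < length ys" "i = length (morph_ext phi (take m ys))"
      using me_occ[of p phi, OF occ2 preW] by blast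
    thus "\<exists>m<length ys. i = length (morph_ext sig (take m ys))"
      using me_len[of sig phi, OF lensig] by metis
  qed
  show ?thesis using conj std spec unfolding standard_special_P_def by blast
qed

end
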